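(* Let $\psi:(0,+\infty)\to\mathbb R$ be a $C^1$ concave function with $\psi>0$ and $\psi'>0$, and assume $\psi(1)D_w$ lies in the image of $\psi$ (so that $\psi^{-1}(\psi(1)D_w)$ is defined; $\psi^{-1}$ is the inverse of the strictly increasing $\psi$). Suppose $f:V\to(0,\infty)$ and $(\Delta^\psi f)(x)<0$ at some vertex $x$. Then $$\Gamma^{\psi}(f)(x)\leq D_{\mu}\left[\psi'(1)\left(\psi^{-1}(\psi(1)D_{w})-1\right)+\psi(1)\right].$$
   Context: Graphs: $G=(V,E)$ is a connected, locally finite graph; each edge $xy$ carries a weight $w_{xy}>0$ (possibly asymmetric), and $\mu:V\to(0,\infty)$ is a vertex measure; $y\sim x$ means $xy\in E$, $\deg(x)=\sum_{y\sim x}w_{xy}<\infty$, $D_\mu=\sup_{x}\deg(x)/\mu(x)$, $D_w=\sup_{x\sim y}\deg(x)/w_{xy}$ (assumed finite). Laplacian: $\Delta f(x)=\frac{1}{\mu(x)}\sum_{y\sim x}w_{xy}(f(y)-f(x))$. For $\psi:(0,\infty)\to\mathbb R$ and $f:V\to(0,\infty)$: $\Delta^\psi f(x)=\Delta\big[\psi\big(\tfrac{f}{f(x)}\big)\big](x)$; for $C^1$ $\psi$, $\overline\psi(s)=\psi'(1)(s-1)-(\psi(s)-\psi(1))$ and $\Gamma^\psi f=\Delta^{\overline\psi}f$. *)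

theory Defs
  imports "HOL-Analysis.Analysis"
begin

definition nbrs :: "('v \<Rightarrow> 'v \<Rightarrow> bool) \<Rightarrow> 'v \<Rightarrow> 'v set" where
  "nbrs E x = {y. E x y}"

definition weighted_graph ::
  "('v \<Rightarrow> 'v \<Rightarrow> bool) \<Rightarrow> ('v \<Rightarrow> 'v \<Rightarrow> real) \<Rightarrow> ('v \<Rightarrow> real) \<Rightarrow> bool" where
  "weighted_graph E w mu \<longleftrightarrow>
     (\<forall>x y. E x y \<longrightarrow> E y x) \<and>
     (\<forall>x. finite (nbrs E x)) \<and>
     (\<forall>x y. (E\<^sup>*\<^sup>*) x y) \<and>
     (\<forall>x y. E x y \<longrightarrow> w x y > 0) \<and>
     (\<forall>x. mu x > 0)"

definition deg :: "('v \<Rightarrow> 'v \<Rightarrow> bool) \<Rightarrow> ('v \<Rightarrow> 'v \<Rightarrow> real) \<Rightarrow> 'v \<Rightarrow> real" where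
  "deg E w x = (\<Sum>y\<in>nbrs E x. w x y)"

definition D_mu :: "('v \<Rightarrow> 'v \<Rightarrow> bool) \<Rightarrow> ('v \<Rightarrow> 'v \<Rightarrow> real) \<Rightarrow> ('v \<Rightarrow> real) \<Rightarrow> real" where
  "D_mu E w mu = (SUP x. deg E w x / mu x)"

definition D_w :: "('v \<Rightarrow> 'v \<Rightarrow> bool) \<Rightarrow> ('v \<Rightarrow> 'v \<Rightarrow> real) \<Rightarrow> real" where
  "D_w E w = (SUP p\<in>{(x,y). E x y}. deg E w (fst p) / w (fst p) (snd p))"

definition D_finite :: "('v \<Rightarrow> 'v \<Rightarrow> bool) \<Rightarrow> ('v \<Rightarrow> 'v \<Rightarrow> real) \<Rightarrow> ('v \<Rightarrow> real) \<Rightarrow> bool" where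
  "D_finite E w mu \<longleftrightarrow>
     bdd_above (range (\<lambda>x. deg E w x / mu x)) \<and>
     bdd_above ((\<lambda>p. deg E w (fst p) / w (fst p) (snd p)) ` {(x,y). E x y})"

definition laplacian ::
  "('v \<Rightarrow> 'v \<Rightarrow> bool) \<Rightarrow> ('v \<Rightarrow> 'v \<Rightarrow> real) \<Rightarrow> ('v \<Rightarrow> real) \<Rightarrow> ('v \<Rightarrow> real) \<Rightarrow> 'v \<Rightarrow> real" where
  "laplacian E w mu f x = (1 / mu x) * (\<Sum>y\<in>nbrs E x. w x y * (f y - f x))"

definition psi_laplacian ::
  "('v \<Rightarrow> 'v \<Rightarrow> bool) \<Rightarrow> ('v \<Rightarrow> 'v \<Rightarrow> real) \<Rightarrow> ('v \<Rightarrow> real) \<Rightarrow> (real \<Rightarrow> real) \<Rightarrow> ('v \<Rightarrow> real) \<Rightarrow> 'v \<Rightarrow> real" where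
  "psi_laplacian E w mu \<psi> f x = laplacian E w mu (\<lambda>y. \<psi> (f y / f x)) x"

definition psi_bar :: "(real \<Rightarrow> real) \<Rightarrow> real \<Rightarrow> real" where
  "psi_bar \<psi> s = deriv \<psi> 1 * (s - 1) - (\<psi> s - \<psi> 1)"

definition psi_Gamma ::
  "('v \<Rightarrow> 'v \<Rightarrow> bool) \<Rightarrow> ('v \<Rightarrow> 'v \<Rightarrow> real) \<Rightarrow> ('v \<Rightarrow> real) \<Rightarrow> (real \<Rightarrow> real) \<Rightarrow> ('v \<Rightarrow> real) \<Rightarrow> 'v \<Rightarrow> real" where
  "psi_Gamma E w mu \<psi> f = psi_laplacian E w mu (psi_bar \<psi>) f"

end

theory Submission
  imports Defs
begin

theorem mainTheorem5:
  fixes E :: "'v \<Rightarrow> 'v \<Rightarrow> bool" and w :: "'v \<Rightarrow> 'v \<Rightarrow> real" and mu :: "'v \<Rightarrow> real"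
    and \<psi> :: "real \<Rightarrow> real" and f :: "'v \<Rightarrow> real" and x :: 'v
  assumes G: "weighted_graph E w mu"
    and Dfin: "D_finite E w mu"
    and C1: "\<forall>s>0. \<psi> differentiable (at s)" "continuous_on {0<..} (deriv \<psi>)"
    and conc: "concave_on {0<..} \<psi>"
    and pos: "\<forall>s>0. \<psi> s > 0"
    and dpos: "\<forall>s>0. deriv \<psi> s > 0"
    and img: "\<psi> 1 * D_w E w \<in> \<psi> ` {0<..}"
    and fpos: "\<forall>y. f y > 0"
    and neg: "psi_laplacian E w mu \<psi> f x < 0"
  shows "psi_Gamma E w mu \<psi> f x \<le>
    D_mu E w mu * (deriv \<psi> 1 * (the_inv_into {0<..} \<psi> (\<psi> 1 * D_w E w) - 1) + \<psi> 1)"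
proof -
  have D: "\<And>s. s > 0 \<Longrightarrow> (\<psi> has_real_derivative deriv \<psi> s) (at s)"
    using C1(1) by (simp add: DERIV_deriv_iff_real_differentiable)
  have strict: "\<psi> a < \<psi> b" if "0 < a" "a < b" for a b
    using that(2)
  proof (rule DERIV_pos_imp_increasing)
    fix t assume "a \<le> t" "t \<le> b"
    hence "t > 0" using that by linarith
    thus "\<exists>y. DERIV \<psi> t :> y \<and> y > 0" using D dpos by blast
  qed
  have inj: "inj_on \<psi> {0<..}"
  proof (rule inj_onI)
    fix a b :: real assume "a \<in> {0<..}" "b \<in> {0<..}" "\<psi> a = \<psi> b"
    thus "a = b" using strict[of a b] strict[of b a] by (cases a b rule: linorder_cases) auto
  qed
  define T where "T = the_inv_into {0<..} \<psi> (\<psi> 1 * D_w E w)"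
  have T: "T > 0" "\<psi> T = \<psi> 1 * D_w E w"
    using img inj unfolding T_def
    by (auto simp: the_inv_into_f_eq the_inv_into_f_f)
  have tan: "\<psi> t \<le> \<psi> 1 + deriv \<psi> 1 * (t - 1)" if "t > 0" for t
  proof -
    have cv: "convex_on {0<..} (\<lambda>x. - \<psi> x)" using conc by (simp add: concave_on_def)
    have "((\<lambda>x. - \<psi> x) has_real_derivative - deriv \<psi> 1) (at 1 within {0<..})"
      using D[of 1] by (auto intro: derivative_eq_intros has_field_derivative_at_within)
    from convex_on_imp_above_tangent[OF cv _ _ _ this, of t] that
    show ?thesis by (simp add: interior_open)
  qed
  define K where "K = deriv \<psi> 1 * (T - 1) + \<psi> 1"
  have K0: "K \<ge> 0" using tan[OF T(1)] pos T(1) unfolding K_def by fastforce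
  have wg: "weighted_graph E w mu" by fact
  note Gd = wg[unfolded weighted_graph_def]
  let ?N = "nbrs E x"
  have fin: "finite ?N" using Gd by blast
  have wpos: "\<And>y. y \<in> ?N \<Longrightarrow> w x y > 0" using Gd by (auto simp: nbrs_def)
  have mupos: "mu x > 0" using Gd by blast
  define s where "s y = f y / f x" for y
  have spos: "s y > 0" for y using fpos by (simp add: s_def)
  have fx1: "f x / f x = 1" using fpos by (metis divide_self less_irrefl)
  have sumlt: "(\<Sum>y\<in>?N. w x y * \<psi> (s y)) < \<psi> 1 * deg E w x"
  proof -
    have "(1 / mu x) * (\<Sum>y\<in>?N. w x y * (\<psi> (s y) - \<psi> 1)) < 0"
      using neg fx1 unfolding psi_laplacian_def laplacian_def s_def by simp
    hence "(\<Sum>y\<in>?N. w x y * (\<psi> (s y) - \<psi> 1)) < 0"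
      using mupos by (simp add: divide_less_0_iff)
    thus ?thesis
      by (simp add: deg_def right_diff_distrib sum_subtractf sum_distrib_left mult.commute)
  qed
  have sltT: "s y < T" if y: "y \<in> ?N" for y
  proof -
    have "w x y * \<psi> (s y) \<le> (\<Sum>z\<in>?N. w x z * \<psi> (s z))"
      by (rule member_le_sum[OF y _ fin]) (use wpos pos spos in \<open>auto intro: less_imp_le\<close>)
    with sumlt have "w x y * \<psi> (s y) < \<psi> 1 * deg E w x" by linarith
    hence "\<psi> (s y) < \<psi> 1 * (deg E w x / w x y)"
      using wpos[OF y] by (simp add: field_simps)
    also have "deg E w x / w x y \<le> D_w E w"
      unfolding D_w_def
      by (rule cSUP_upper2[where x="(x,y)"]) (use Dfin y in \<open>auto simp: D_finite_def nbrs_def\<close>)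
    hence "\<psi> 1 * (deg E w x / w x y) \<le> \<psi> 1 * D_w E w"
      by (rule mult_left_mono) (use pos in \<open>auto intro: less_imp_le\<close>)
    finally have "\<psi> (s y) < \<psi> T" using T by simp
    thus ?thesis
    proof (rule contrapos_pp)
      assume "\<not> s y < T"
      hence "T = s y \<or> T < s y" by auto
      thus "\<not> \<psi> (s y) < \<psi> T" using strict[OF T(1), of "s y"] by auto
    qed
  qed
  have "psi_Gamma E w mu \<psi> f x = (1 / mu x) * (\<Sum>y\<in>?N. w x y * psi_bar \<psi> (s y))"
    unfolding psi_Gamma_def psi_laplacian_def laplacian_def s_def
    using fx1 by (simp add: psi_bar_def[of _ 1])
  also have "\<dots> \<le> (1 / mu x) * (\<Sum>y\<in>?N. w x y * K)"
  proof (rule mult_left_mono[OF sum_mono])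
    fix y assume y: "y \<in> ?N"
    have "psi_bar \<psi> (s y) \<le> K"
    proof -
      have "deriv \<psi> 1 * (s y - 1) \<le> deriv \<psi> 1 * (T - 1)"
        using dpos[rule_format, of 1] sltT[OF y] by (intro mult_left_mono) auto
      moreover have "\<psi> (s y) > 0" using pos spos by blast
      ultimately show ?thesis unfolding psi_bar_def K_def by linarith
    qed
    thus "w x y * psi_bar \<psi> (s y) \<le> w x y * K" using wpos[OF y] by (simp add: mult_left_mono)
  qed (use mupos in simp)
  also have "\<dots> = deg E w x / mu x * K"
    by (simp add: deg_def sum_distrib_right)
  also have "\<dots> \<le> D_mu E w mu * K"
    unfolding D_mu_def
    by (intro mult_right_mono K0 cSUP_upper) (use Dfin in \<open>auto simp: D_finite_def\<close>)
  finally show ?thesis unfolding K_def T_def .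
qed

end
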